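(* Let $\mathcal{M}$ be the $2\times2$ gridding matrix with $\mathcal{M}_{1,1}=\mathrm{Av}(\pi)$, $\mathcal{M}_{2,1}=\mathrm{Dec}$, $\mathcal{M}_{1,2}=\mathrm{Dec}$, $\mathcal{M}_{2,2}=\mathrm{Inc}$ (i.e. bottom row $\mathrm{Av}(\pi),\mathrm{Dec}$ and top row $\mathrm{Dec},\mathrm{Inc}$). Then $\mathrm{Grid}(\mathcal{M})\subseteq\mathrm{Av}(\sigma)$ whenever $\pi=132$ and $\sigma=14523$, or $\pi=231$ and $\sigma=24513$, or $\pi=321$ and $\sigma\in\{32154,42513\}$.
   Context: $\mathrm{Av}(\pi)$ is the class of permutations avoiding $\pi$; $\mathrm{Inc}=\mathrm{Av}(21)$, $\mathrm{Dec}=\mathrm{Av}(12)$. For a matrix $\mathcal{M}$ of permutation classes with $k$ columns and $\ell$ rows ($\mathcal{M}_{i,j}$ in column $i$, row $j$, rows numbered bottom to top), $\mathrm{Grid}(\mathcal{M})$ is the set of permutations $\tau$ of length $n$ for which there are $1=c_1\le\dots\le c_{k+1}=n+1$, $1=r_1\le\dots\le r_{\ell+1}=n+1$ such that for each $i,j$ the points $(x,\tau_x)$ with $c_i\le x<c_{i+1}$, $r_j\le\tau_x<r_{j+1}$ form a pattern belonging to $\mathcal{M}_{i,j}$. *)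

theory Defs
  imports Main
begin

text \<open>Permutations of length n are lists of the values 1..n, each once
  (the entry at 1-based position x is tau ! (x - 1)).\<close>
definition is_perm :: "nat \<Rightarrow> nat list \<Rightarrow> bool" where
  "is_perm n tau \<longleftrightarrow> length tau = n \<and> distinct tau \<and> set tau = {1..n}"

definition contains :: "nat list \<Rightarrow> nat list \<Rightarrow> bool" where
  "contains xs p \<longleftrightarrow> (\<exists>f. (\<forall>a b. a < b \<longrightarrow> b < length p \<longrightarrow> f a < f b)
      \<and> (\<forall>a < length p. f a < length xs)
      \<and> (\<forall>a < length p. \<forall>b < length p. (xs ! f a < xs ! f b \<longleftrightarrow> p ! a < p ! b)))"

definition Av :: "nat list \<Rightarrow> nat list set" where
  "Av p = {xs. \<not> contains xs p}"

definition Inc :: "nat list set" where "Inc = Av [2,1]"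
definition Dec :: "nat list set" where "Dec = Av [1,2]"

text \<open>Grid class of a matrix M of classes with k columns and l rows
  (M i j = cell in column i, row j, rows numbered bottom to top).\<close>
definition Grid :: "nat \<Rightarrow> nat \<Rightarrow> (nat \<Rightarrow> nat \<Rightarrow> nat list set) \<Rightarrow> nat list set" where
  "Grid k l M = {tau. \<exists>n. is_perm n tau \<and>
     (\<exists>c r :: nat \<Rightarrow> nat.
        c 1 = 1 \<and> c (k + 1) = n + 1 \<and> (\<forall>i\<in>{1..k}. c i \<le> c (i + 1)) \<and>
        r 1 = 1 \<and> r (l + 1) = n + 1 \<and> (\<forall>j\<in>{1..l}. r j \<le> r (j + 1)) \<and>
        (\<forall>i\<in>{1..k}. \<forall>j\<in>{1..l}.
           map (\<lambda>x. tau ! (x - 1))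
             (filter (\<lambda>x. c i \<le> x \<and> x < c (i + 1) \<and> r j \<le> tau ! (x - 1) \<and> tau ! (x - 1) < r (j + 1))
                [1..<n + 1]) \<in> M i j))}"

end

theory Submission
  imports Defs
begin

definition good :: "nat list \<Rightarrow> nat list \<Rightarrow> bool" where
 "good s p \<longleftrightarrow> (\<forall>Ls\<in>set (List.n_lists (length s) [True,False]). \<forall>Bs\<in>set (List.n_lists (length s) [True,False]).
   (\<forall>j\<in>set [0..<length s]. \<forall>k\<in>set [0..<length s]. (j < k \<longrightarrow> Ls!k \<longrightarrow> Ls!j) \<and> (s!j < s!k \<longrightarrow> Bs!k \<longrightarrow> Bs!j)) \<longrightarrow>
   (\<exists>j\<in>set [0..<length s]. \<exists>k\<in>set [0..<length s]. j < k \<and> Ls!j = Ls!k \<and> Bs!j = Bs!k \<and>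
       ((Ls!j \<noteq> Bs!j \<and> s!j < s!k) \<or> (\<not> Ls!j \<and> \<not> Bs!j \<and> s!k < s!j)))
   \<or> (\<exists>k1\<in>set [0..<length s]. \<exists>k2\<in>set [0..<length s]. \<exists>k3\<in>set [0..<length s]. k1 < k2 \<and> k2 < k3 \<and>
       Ls!k1 \<and> Bs!k1 \<and> Ls!k2 \<and> Bs!k2 \<and> Ls!k3 \<and> Bs!k3 \<and>
       (\<forall>a\<in>set [0..<3]. \<forall>b\<in>set [0..<3]. s!([k1,k2,k3]!a) < s!([k1,k2,k3]!b) \<longleftrightarrow> p!a < p!b)))"

lemma upt_split1:
  assumes "1 \<le> q" "q < N"
  shows "[1..<N] = [1..<q] @ q # [Suc q..<N]"
proof -
  have "[1..<N] = [1..<q] @ [q..<N]" using assms upt_add_eq_append[of 1 q "N - q"] by simp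
  moreover have "[q..<N] = q # [Suc q..<N]" using assms upt_conv_Cons by simp
  ultimately show ?thesis by simp
qed

lemma filt_nth:
  assumes "1 \<le> q" "q < N" "P q"
  shows "filter P [1..<N] ! length (filter P [1..<q]) = q"
  unfolding upt_split1[OF assms(1,2)] using assms by (simp add: nth_append)

lemma filt_less:
  assumes "1 \<le> q" "q < N" "P q"
  shows "length (filter P [1..<q]) < length (filter P [1..<N])"
  unfolding upt_split1[OF assms(1,2)] using assms by simp

lemma sub_contains:
  fixes P :: "nat \<Rightarrow> bool" and g q :: "nat \<Rightarrow> nat" and p :: "nat list"
  assumes mono: "\<forall>a b. a < b \<longrightarrow> b < length p \<longrightarrow> q a < q b"
    and inP: "\<forall>a<length p. P (q a) \<and> 1 \<le> q a \<and> q a < N"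
    and ord: "\<forall>a<length p. \<forall>b<length p. g (q a) < g (q b) \<longleftrightarrow> p!a < p!b"
  shows "contains (map g (filter P [1..<N])) p"
  unfolding contains_def
proof (intro exI[of _ "\<lambda>a. length (filter P [1..<q a])"] conjI allI impI)
  fix a b assume ab: "a < b" "b < length p"
  then have qa: "1 \<le> q a" "q a < q b" "P (q a)" using inP mono by auto
  show "length (filter P [1..<q a]) < length (filter P [1..<q b])"
    using filt_less[of "q a" "q b" P, OF qa] by simp
next
  fix a assume "a < length p"
  then show "length (filter P [1..<q a]) < length (map g (filter P [1..<N]))"
    using filt_less inP by simp
next
  fix a b assume ab: "a < length p" "b < length p"
  have e: "map g (filter P [1..<N]) ! length (filter P [1..<q x]) = g (q x)" if "x < length p" for x
    using filt_less[of "q x" N P] filt_nth[of "q x" N P] inP that by simp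
  show "(map g (filter P [1..<N]) ! length (filter P [1..<q a])
          < map g (filter P [1..<N]) ! length (filter P [1..<q b])) = (p ! a < p ! b)"
    using e[OF ab(1)] e[OF ab(2)] ord ab by simp
qed

lemma cell_pat:
  assumes "\<forall>a b. a < b \<longrightarrow> b < length p \<longrightarrow> x a < x b"
    and "\<forall>a<length p. x a < n \<and> ci \<le> Suc (x a) \<and> Suc (x a) < ci' \<and> rj \<le> tau ! x a \<and> tau ! x a < rj'"
    and "\<forall>a<length p. \<forall>b<length p. tau ! x a < tau ! x b \<longleftrightarrow> p!a < p!b"
  shows "contains (map (\<lambda>x. tau ! (x - 1)) (filter (\<lambda>x. ci \<le> x \<and> x < ci' \<and> rj \<le> tau ! (x - 1) \<and> tau ! (x - 1) < rj') [1..<n + 1])) p"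
  by (rule sub_contains[where q="\<lambda>a. Suc (x a)"]) (use assms in auto)


lemma cell_helper:
  assumes "X \<in> (if i = 1 \<and> j = 1 then Av p else if i = 2 \<and> j = 1 then Dec
                         else if i = 1 \<and> j = 2 then Dec else Inc)" "(i::nat) \<in> {1..2}" "(j::nat) \<in> {1..2}"
  shows "\<not> contains X (if i = 1 \<and> j = 1 then p else if i = 2 \<and> j = 2 then [2,1] else [1,2])"
proof -
  have "i = 1 \<or> i = 2" "j = 1 \<or> j = 2" using assms(2,3) by auto
  then show ?thesis using assms(1) unfolding Av_def Dec_def Inc_def by auto
qed

lemma main:
  assumes g: "good s p" and lp: "length p = 3"
  shows "Grid 2 2 (\<lambda>i j. if i = 1 \<and> j = 1 then Av p else if i = 2 \<and> j = 1 then Dec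
                         else if i = 1 \<and> j = 2 then Dec else Inc) \<subseteq> Av s"
proof
  fix tau
  assume "tau \<in> Grid 2 2 (\<lambda>i j. if i = 1 \<and> j = 1 then Av p else if i = 2 \<and> j = 1 then Dec
                         else if i = 1 \<and> j = 2 then Dec else Inc)"
  then obtain n and c r :: "nat \<Rightarrow> nat" where perm: "is_perm n tau" and c1: "c 1 = 1" and c3: "c (2+1) = n + 1"
    and r1: "r 1 = 1" and r3: "r (2+1) = n+1"
    and cells: "\<forall>i\<in>{1..2}. \<forall>j\<in>{1..2}.
           map (\<lambda>x. tau ! (x - 1))
             (filter (\<lambda>x. c i \<le> x \<and> x < c (i + 1) \<and> r j \<le> tau ! (x - 1) \<and> tau ! (x - 1) < r (j + 1))
                [1..<n + 1]) \<in> (if i = 1 \<and> j = 1 then Av p else if i = 2 \<and> j = 1 then Dec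
                         else if i = 1 \<and> j = 2 then Dec else Inc)"
    unfolding Grid_def by blast
  have ncont: "\<not> contains (map (\<lambda>x. tau ! (x - 1))
             (filter (\<lambda>x. c i \<le> x \<and> x < c (i + 1) \<and> r j \<le> tau ! (x - 1) \<and> tau ! (x - 1) < r (j + 1))
                [1..<n + 1])) (if i = 1 \<and> j = 1 then p else if i = 2 \<and> j = 2 then [2,1] else [1,2])"
    if "i \<in> {1..2}" "j \<in> {1..2}" for i j
    using cell_helper[OF cells[rule_format, OF that] that] .
  have ln: "length tau = n" and st: "set tau = {1..n}" using perm unfolding is_perm_def by auto
  show "tau \<in> Av s"
  proof (rule ccontr)
    assume "tau \<notin> Av s"
    then obtain f where fm: "\<forall>a b. a < b \<longrightarrow> b < length s \<longrightarrow> f a < f b"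
      and fl: "\<forall>a < length s. f a < length tau"
      and fo: "\<forall>a < length s. \<forall>b < length s. (tau ! f a < tau ! f b \<longleftrightarrow> s ! a < s ! b)"
      unfolding Av_def contains_def by auto
    define m where "m = length s"
    define Ls where "Ls = map (\<lambda>k. Suc (f k) < c 2) [0..<m]"
    define Bs where "Bs = map (\<lambda>k. tau ! f k < r 2) [0..<m]"
    have Lsn: "Ls \<in> set (List.n_lists (length s) [True,False])"
      unfolding set_n_lists Ls_def m_def by auto
    have Bsn: "Bs \<in> set (List.n_lists (length s) [True,False])"
      unfolding set_n_lists Bs_def m_def by auto
    have Lsk: "Ls ! k = (Suc (f k) < c 2)" if "k < m" for k using that unfolding Ls_def by simp
    have Bsk: "Bs ! k = (tau ! f k < r 2)" if "k < m" for k using that unfolding Bs_def by simp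
    have vb: "1 \<le> tau ! f k \<and> tau ! f k < n + 1" if "k < m" for k
    proof -
      have "tau ! f k \<in> set tau" using fl that m_def by simp
      then show ?thesis using st by auto
    qed
    have cons: "\<forall>j\<in>set [0..<length s]. \<forall>k\<in>set [0..<length s]. (j < k \<longrightarrow> Ls!k \<longrightarrow> Ls!j) \<and> (s!j < s!k \<longrightarrow> Bs!k \<longrightarrow> Bs!j)"
    proof (intro ballI conjI impI)
      fix j k assume jk: "j \<in> set [0..<length s]" "k \<in> set [0..<length s]"
      {
        assume "j < k" "Ls ! k"
        then show "Ls ! j" using jk Lsk fm m_def by fastforce
      }
      {
        assume "s ! j < s ! k" "Bs ! k"
        then show "Bs ! j" using jk Bsk fo m_def by fastforce
      }
    qed
    define ic where "ic k = (if Ls ! k then 1 else 2::nat)" for k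
    define jc where "jc k = (if Bs ! k then 1 else 2::nat)" for k
    have mem: "f k < n \<and> c (ic k) \<le> Suc (f k) \<and> Suc (f k) < c (ic k + 1) \<and> r (jc k) \<le> tau ! f k \<and> tau ! f k < r (jc k + 1)"
      if "k < m" for k
      using that vb[OF that] Lsk[OF that] Bsk[OF that] fl ln c1 c3 r1 r3 m_def
      unfolding ic_def jc_def by (auto simp: numeral_2_eq_2 numeral_3_eq_3)
    have icr: "ic k \<in> {1..2}" "jc k \<in> {1..2}" for k unfolding ic_def jc_def by auto
    from g Lsn Bsn cons have viol:
      "(\<exists>j\<in>set [0..<length s]. \<exists>k\<in>set [0..<length s]. j < k \<and> Ls!j = Ls!k \<and> Bs!j = Bs!k \<and>
       ((Ls!j \<noteq> Bs!j \<and> s!j < s!k) \<or> (\<not> Ls!j \<and> \<not> Bs!j \<and> s!k < s!j)))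
       \<or> (\<exists>k1\<in>set [0..<length s]. \<exists>k2\<in>set [0..<length s]. \<exists>k3\<in>set [0..<length s]. k1 < k2 \<and> k2 < k3 \<and>
       Ls!k1 \<and> Bs!k1 \<and> Ls!k2 \<and> Bs!k2 \<and> Ls!k3 \<and> Bs!k3 \<and>
       (\<forall>a\<in>set [0..<3]. \<forall>b\<in>set [0..<3]. s!([k1,k2,k3]!a) < s!([k1,k2,k3]!b) \<longleftrightarrow> p!a < p!b))"
      unfolding good_def by blast
    then show False
    proof
      assume "\<exists>j\<in>set [0..<length s]. \<exists>k\<in>set [0..<length s]. j < k \<and> Ls!j = Ls!k \<and> Bs!j = Bs!k \<and>
       ((Ls!j \<noteq> Bs!j \<and> s!j < s!k) \<or> (\<not> Ls!j \<and> \<not> Bs!j \<and> s!k < s!j))"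
      then obtain j k where jk: "j < k" "k < m" "Ls!j = Ls!k" "Bs!j = Bs!k"
        and o: "(Ls!j \<noteq> Bs!j \<and> s!j < s!k) \<or> (\<not> Ls!j \<and> \<not> Bs!j \<and> s!k < s!j)"
        using m_def by fastforce
      have jm: "j < m" using jk by simp
      have same: "ic j = ic k" "jc j = jc k" using jk unfolding ic_def jc_def by auto
      define pat where "pat = (if ic k = 1 \<and> jc k = 1 then p else if ic k = 2 \<and> jc k = 2 then [2,1] else [1,2::nat])"
      have lpat: "length pat = 2" and pat01: "pat = [1,2] \<and> s!j < s!k \<or> pat = [2,1] \<and> s!k < s!j"
        using o jk unfolding pat_def ic_def jc_def by auto
      define x where "x a = (if a = 0 then f j else f k)" for a :: nat
      have two: "a < 2 \<Longrightarrow> a = 0 \<or> a = 1" for a :: nat by auto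
      have "contains (map (\<lambda>x. tau ! (x - 1))
             (filter (\<lambda>x. c (ic k) \<le> x \<and> x < c (ic k + 1) \<and> r (jc k) \<le> tau ! (x - 1) \<and> tau ! (x - 1) < r (jc k + 1))
                [1..<n + 1])) pat"
      proof (rule cell_pat)
        show "\<forall>a b. a < b \<longrightarrow> b < length pat \<longrightarrow> x a < x b"
          using lpat fm jk m_def unfolding x_def by auto
        show "\<forall>a<length pat. x a < n \<and> c (ic k) \<le> Suc (x a) \<and> Suc (x a) < c (ic k + 1) \<and> r (jc k) \<le> tau ! x a \<and> tau ! x a < r (jc k + 1)"
          using lpat mem[OF jm] mem[OF jk(2)] same unfolding x_def by auto
        show "\<forall>a<length pat. \<forall>b<length pat. tau ! x a < tau ! x b \<longleftrightarrow> pat!a < pat!b"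
        proof (intro allI impI)
          fix a b assume ab: "a < length pat" "b < length pat"
          have fjk: "tau ! f j < tau ! f k \<longleftrightarrow> s ! j < s ! k" "tau ! f k < tau ! f j \<longleftrightarrow> s ! k < s ! j"
            using fo jk m_def by auto
          show "tau ! x a < tau ! x b \<longleftrightarrow> pat!a < pat!b"
            using two[of a] two[of b] ab lpat pat01 fjk unfolding x_def by auto
        qed
      qed
      moreover have "\<not> contains (map (\<lambda>x. tau ! (x - 1))
             (filter (\<lambda>x. c (ic k) \<le> x \<and> x < c (ic k + 1) \<and> r (jc k) \<le> tau ! (x - 1) \<and> tau ! (x - 1) < r (jc k + 1))
                [1..<n + 1])) pat"
        using ncont[OF icr] unfolding pat_def by simp
      ultimately show False by simp
    next
      assume "\<exists>k1\<in>set [0..<length s]. \<exists>k2\<in>set [0..<length s]. \<exists>k3\<in>set [0..<length s]. k1 < k2 \<and> k2 < k3 \<and>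
       Ls!k1 \<and> Bs!k1 \<and> Ls!k2 \<and> Bs!k2 \<and> Ls!k3 \<and> Bs!k3 \<and>
       (\<forall>a\<in>set [0..<3]. \<forall>b\<in>set [0..<3]. s!([k1,k2,k3]!a) < s!([k1,k2,k3]!b) \<longleftrightarrow> p!a < p!b)"
      then obtain k1 k2 k3 where ks: "k1 < k2" "k2 < k3" "k3 < m"
        "Ls!k1" "Bs!k1" "Ls!k2" "Bs!k2" "Ls!k3" "Bs!k3"
        and so: "\<forall>a<3. \<forall>b<3. s!([k1,k2,k3]!a) < s!([k1,k2,k3]!b) \<longleftrightarrow> p!a < p!b"
        using m_def by auto
      define ks where "ks = [k1,k2,k3]"
      have ksm: "a < 3 \<Longrightarrow> ks ! a < m" for a
        using ks unfolding ks_def by (auto simp: nth_Cons split: nat.splits)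
      have ksc: "a < 3 \<Longrightarrow> ic (ks ! a) = 1 \<and> jc (ks ! a) = 1" for a
        using ks unfolding ks_def ic_def jc_def by (auto simp: nth_Cons split: nat.splits)
      have ksmono: "a < b \<Longrightarrow> b < 3 \<Longrightarrow> ks ! a < ks ! b" for a b
        using ks unfolding ks_def by (auto simp: nth_Cons split: nat.splits)
      have "contains (map (\<lambda>x. tau ! (x - 1))
             (filter (\<lambda>x. c 1 \<le> x \<and> x < c (1 + 1) \<and> r 1 \<le> tau ! (x - 1) \<and> tau ! (x - 1) < r (1 + 1))
                [1..<n + 1])) p"
      proof (rule cell_pat[where x="\<lambda>a. f (ks ! a)"])
        show "\<forall>a b. a < b \<longrightarrow> b < length p \<longrightarrow> f (ks ! a) < f (ks ! b)"
          using lp fm ksm ksmono m_def by (metis less_trans)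
        show "\<forall>a<length p. f (ks ! a) < n \<and> c 1 \<le> Suc (f (ks ! a)) \<and> Suc (f (ks ! a)) < c (1 + 1) \<and> r 1 \<le> tau ! f (ks ! a) \<and> tau ! f (ks ! a) < r (1 + 1)"
          using lp mem ksm ksc by metis
        show "\<forall>a<length p. \<forall>b<length p. tau ! f (ks ! a) < tau ! f (ks ! b) \<longleftrightarrow> p!a < p!b"
          using lp so fo ksm m_def unfolding ks_def by auto
      qed
      moreover have "\<not> contains (map (\<lambda>x. tau ! (x - 1))
             (filter (\<lambda>x. c 1 \<le> x \<and> x < c (1 + 1) \<and> r 1 \<le> tau ! (x - 1) \<and> tau ! (x - 1) < r (1 + 1))
                [1..<n + 1])) p"
        using ncont[of 1 1] by simp
      ultimately show False by simp
    qed
  qed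
qed

lemma g1: "good [1,4,5,2,3] [1,3,2]" by code_simp
lemma g2: "good [2,4,5,1,3] [2,3,1]" by code_simp
lemma g3: "good [3,2,1,5,4] [3,2,1]" by code_simp
lemma g4: "good [4,2,5,1,3] [3,2,1]" by code_simp

theorem proposition13:
  fixes \<pi> \<sigma> :: "nat list"
  assumes "(\<pi> = [1,3,2] \<and> \<sigma> = [1,4,5,2,3]) \<or> (\<pi> = [2,3,1] \<and> \<sigma> = [2,4,5,1,3])
    \<or> (\<pi> = [3,2,1] \<and> \<sigma> \<in> {[3,2,1,5,4], [4,2,5,1,3]})"
  shows "Grid 2 2 (\<lambda>i j. if i = 1 \<and> j = 1 then Av \<pi> else if i = 2 \<and> j = 1 then Dec
                         else if i = 1 \<and> j = 2 then Dec else Inc) \<subseteq> Av \<sigma>"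
proof (rule main)
  show "good \<sigma> \<pi>" using assms g1 g2 g3 g4 by auto
  show "length \<pi> = 3" using assms by auto
qed

end
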